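(* Let $A=\{a_1,\dots,a_k\}$ be finite and $u_1,u_2:A\to\mathbb{R}$. Consider the following perfect-information game: (1) player 1 proposes $\alpha\in\mathbb{R}$; (2) player 2, observing $\alpha$, decides whether to be the chooser (player 1 then being the proposer) or the proposer (player 1 then being the chooser); (3) the proposer chooses a price vector $p\in P_\alpha=\{p\in\mathbb{R}^k:\sum_j p_j=\alpha\}$; (4) the chooser, observing $p$, selects an option $a_j\in A$ and pays $p_j$ to the proposer. Payoffs are quasi-linear: $u_i(a_j)+t_i$ where $t_i$ is the net transfer received. Then in every (pure) subgame-perfect Nash equilibrium, $\alpha=\frac{k}{2}\bigl(\mathrm{Avg}_1+\mathrm{Avg}_2-\max(u)\bigr)$, the selected option is efficient, and the equilibrium payoffs of players 1 and 2 are $\frac12\max(u)-\frac12(\mathrm{Avg}_2-\mathrm{Avg}_1)$ and $\frac12\max(u)+\frac12(\mathrm{Avg}_2-\mathrm{Avg}_1)$ respectively.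
   Context: $\mathrm{Avg}_i=\frac1k\sum_j u_i(a_j)$, $\max(u)=\max_{a\in A}(u_1(a)+u_2(a))$; an option is efficient if it attains $\max(u)$. Subgame-perfect Nash equilibrium: a profile of pure strategies (player 1: $\alpha$, and, depending on roles, price choices as functions of the history and option choices as functions of the history) such that in every subgame the continuation strategies are mutually best responses. *)

theory Defs
  imports Complex_Main
begin

text \<open>Options A = {a_0, ..., a_(k-1)} are represented by their indices j < k;
  utilities u1, u2 :: nat => real (only values on indices below k matter).
  Price vectors in R^k are functions nat => real (only the first k coordinates matter).\<close>

definition Avg :: "nat \<Rightarrow> (nat \<Rightarrow> real) \<Rightarrow> real" where
  "Avg k u = (1 / real k) * (\<Sum>j<k. u j)"

definition maxu :: "nat \<Rightarrow> (nat \<Rightarrow> real) \<Rightarrow> (nat \<Rightarrow> real) \<Rightarrow> real" where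
  "maxu k u1 u2 = Max ((\<lambda>j. u1 j + u2 j) ` {..<k})"

definition efficient :: "nat \<Rightarrow> (nat \<Rightarrow> real) \<Rightarrow> (nat \<Rightarrow> real) \<Rightarrow> nat \<Rightarrow> bool" where
  "efficient k u1 u2 j \<longleftrightarrow> j < k \<and> u1 j + u2 j = maxu k u1 u2"

definition Pset :: "nat \<Rightarrow> real \<Rightarrow> (nat \<Rightarrow> real) set" where
  "Pset k a = {p. (\<Sum>j<k. p j) = a}"

text \<open>A pure strategy profile.
  alpha: player 1's proposal.
  role a: player 2's decision after observing a; True = player 2 is the chooser
     (player 1 proposer), False = player 2 is the proposer (player 1 chooser).
  price1 a: player 1's price vector at history (a, True) (player 1 proposer).
  price2 a: player 2's price vector at history (a, False) (player 2 proposer).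
  choice1 a p: player 1's option at history (a, False, p) (player 1 chooser).
  choice2 a p: player 2's option at history (a, True, p) (player 2 chooser).\<close>
record profile =
  alpha :: real
  role :: "real \<Rightarrow> bool"
  price1 :: "real \<Rightarrow> nat \<Rightarrow> real"
  price2 :: "real \<Rightarrow> nat \<Rightarrow> real"
  choice1 :: "real \<Rightarrow> (nat \<Rightarrow> real) \<Rightarrow> nat"
  choice2 :: "real \<Rightarrow> (nat \<Rightarrow> real) \<Rightarrow> nat"

definition legal :: "nat \<Rightarrow> profile \<Rightarrow> bool" where
  "legal k s \<longleftrightarrow>
     (\<forall>a. price1 s a \<in> Pset k a \<and> price2 s a \<in> Pset k a) \<and>
     (\<forall>a. \<forall>p\<in>Pset k a. choice1 s a p < k \<and> choice2 s a p < k)"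

datatype hist = Root | H1 real | H2 real bool | H3 real bool "nat \<Rightarrow> real"

definition valid_hist :: "nat \<Rightarrow> hist \<Rightarrow> bool" where
  "valid_hist k h = (case h of H3 a b p \<Rightarrow> p \<in> Pset k a | _ \<Rightarrow> True)"

definition chosen :: "profile \<Rightarrow> real \<Rightarrow> bool \<Rightarrow> (nat \<Rightarrow> real) \<Rightarrow> nat" where
  "chosen s a b p = (if b then choice2 s a p else choice1 s a p)"

definition proposed :: "profile \<Rightarrow> real \<Rightarrow> bool \<Rightarrow> nat \<Rightarrow> real" where
  "proposed s a b = (if b then price1 s a else price2 s a)"

definition terminal :: "profile \<Rightarrow> hist \<Rightarrow> real \<times> bool \<times> (nat \<Rightarrow> real) \<times> nat" where
  "terminal s h = (case h of
      H3 a b p \<Rightarrow> (a, b, p, chosen s a b p)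
    | H2 a b \<Rightarrow> (a, b, proposed s a b, chosen s a b (proposed s a b))
    | H1 a \<Rightarrow> (let b = role s a in (a, b, proposed s a b, chosen s a b (proposed s a b)))
    | Root \<Rightarrow> (let a = alpha s; b = role s a in
                (a, b, proposed s a b, chosen s a b (proposed s a b))))"

definition payoff1 :: "(nat \<Rightarrow> real) \<Rightarrow> real \<times> bool \<times> (nat \<Rightarrow> real) \<times> nat \<Rightarrow> real" where
  "payoff1 u1 t = (case t of (a, b, p, j) \<Rightarrow> u1 j + (if b then p j else - p j))"

definition payoff2 :: "(nat \<Rightarrow> real) \<Rightarrow> real \<times> bool \<times> (nat \<Rightarrow> real) \<times> nat \<Rightarrow> real" where
  "payoff2 u2 t = (case t of (a, b, p, j) \<Rightarrow> u2 j + (if b then - p j else p j))"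

definition dev1 :: "profile \<Rightarrow> profile \<Rightarrow> bool" where
  "dev1 s t \<longleftrightarrow> role t = role s \<and> price2 t = price2 s \<and> choice2 t = choice2 s"

definition dev2 :: "profile \<Rightarrow> profile \<Rightarrow> bool" where
  "dev2 s t \<longleftrightarrow> alpha t = alpha s \<and> price1 t = price1 s \<and> choice1 t = choice1 s"

definition SPNE :: "nat \<Rightarrow> (nat \<Rightarrow> real) \<Rightarrow> (nat \<Rightarrow> real) \<Rightarrow> profile \<Rightarrow> bool" where
  "SPNE k u1 u2 s \<longleftrightarrow> legal k s \<and>
     (\<forall>h. valid_hist k h \<longrightarrow>
        (\<forall>t. legal k t \<and> dev1 s t \<longrightarrow> payoff1 u1 (terminal t h) \<le> payoff1 u1 (terminal s h)) \<and>
        (\<forall>t. legal k t \<and> dev2 s t \<longrightarrow> payoff2 u2 (terminal t h) \<le> payoff2 u2 (terminal s h)))"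

end

theory Submission
  imports Defs
begin

lemma H2gen:
  fixes k :: nat and uP uC :: "nat \<Rightarrow> real" and ch :: "(nat \<Rightarrow> real) \<Rightarrow> nat"
    and q :: "nat \<Rightarrow> real" and a :: real
  assumes k: "k \<ge> 1" and q: "q \<in> Pset k a"
    and A: "\<And>p i. p \<in> Pset k a \<Longrightarrow> i < k \<Longrightarrow> uC i - p i \<le> uC (ch p) - p (ch p)"
    and Ak: "\<And>p. p \<in> Pset k a \<Longrightarrow> ch p < k"
    and B: "\<And>p. p \<in> Pset k a \<Longrightarrow> uP (ch p) + p (ch p) \<le> uP (ch q) + q (ch q)"
  shows "uP (ch q) + q (ch q) = maxu k uP uC - Avg k uC + a / k
       \<and> uC (ch q) - q (ch q) = Avg k uC - a / k
       \<and> uP (ch q) + uC (ch q) = maxu k uP uC"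
proof -
  define M where "M = maxu k uP uC"
  define S where "S = (\<Sum>i<k. uC i)"
  define c where "c = Avg k uC - a / k"
  have kpos: "real k > 0" using k by simp
  have Avg: "Avg k uC = S / k" unfolding Avg_def S_def by simp
  have qa: "(\<Sum>i<k. q i) = a" using q unfolding Pset_def by simp
  define j where "j = ch q"
  have jk: "j < k" using Ak[OF q] j_def by simp
  define v where "v = uC j - q j"
  have vi: "\<And>i. i < k \<Longrightarrow> uC i - q i \<le> v" using A[OF q] unfolding v_def j_def by blast
  have "(\<Sum>i<k. uC i - q i) \<le> (\<Sum>i<k. v)" by (rule sum_mono) (simp add: vi)
  hence "S - a \<le> k * v" using qa by (simp add: sum_subtractf S_def)
  hence vlow: "v \<ge> c" unfolding c_def Avg using kpos by (simp add: field_simps)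
  have fin: "finite ((\<lambda>j. uP j + uC j) ` {..<k})" by simp
  have ne: "((\<lambda>j. uP j + uC j) ` {..<k}) \<noteq> {}" using k by (auto simp: lessThan_empty_iff)
  have Mge: "\<And>i. i < k \<Longrightarrow> uP i + uC i \<le> M"
    unfolding M_def maxu_def by (rule Max_ge[OF fin]) auto
  obtain js where js: "js < k" "uP js + uC js = M"
    using Max_in[OF fin ne] unfolding M_def maxu_def by auto
  define P where "P = uP j + q j"
  have Pup: "P \<le> M - c" using Mge[OF jk] vlow unfolding P_def v_def by linarith
  have Plow: "P \<ge> M - c - \<delta>" if dpos: "\<delta> > 0" for \<delta>
  proof -
    define d where "d = (S - a + (real k - 1) * \<delta>) / k"
    define p where "p = (\<lambda>i. uC i - d + \<delta> - (if i = js then \<delta> else 0))"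
    have "(\<Sum>i<k. p i) = S - k * d + k * \<delta> - \<delta>"
      unfolding p_def using js(1)
      by (simp add: sum_subtractf sum.distrib S_def)
    also have "\<dots> = a" unfolding d_def using kpos by (simp add: field_simps)
    finally have pP: "p \<in> Pset k a" unfolding Pset_def by simp
    have chp: "ch p = js"
    proof (rule ccontr)
      assume ne: "ch p \<noteq> js"
      have "uC js - p js \<le> uC (ch p) - p (ch p)" using A[OF pP js(1)] .
      thus False using ne dpos unfolding p_def by simp
    qed
    have "uP js + p js \<le> P" using B[OF pP] chp unfolding P_def j_def by simp
    moreover have "uP js + p js = M - d" unfolding p_def using js(2) by simp
    moreover have "d \<le> c + \<delta>"
    proof -
      have "d = c + (real k - 1) * \<delta> / k" unfolding d_def c_def Avg using kpos
        by (simp add: field_simps)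
      moreover have "(real k - 1) * \<delta> / k \<le> \<delta>" using kpos dpos
        by (simp add: field_simps)
      ultimately show ?thesis by simp
    qed
    ultimately show ?thesis by linarith
  qed
  have Peq: "P = M - c"
  proof (rule ccontr)
    assume "P \<noteq> M - c"
    hence lt: "P < M - c" using Pup by simp
    have "P \<ge> M - c - (M - c - P) / 2" by (rule Plow) (use lt in simp)
    thus False using lt by (simp add: field_simps)
  qed
  have "uP j + uC j = P + v" unfolding P_def v_def by simp
  hence eff: "uP j + uC j = M" using Peq vlow Mge[OF jk] by linarith
  have "v = c" using eff Peq unfolding P_def v_def by linarith
  thus ?thesis using Peq eff unfolding P_def v_def c_def M_def j_def by simp
qed

lemma maxu_comm: "maxu k u2 u1 = maxu k u1 u2"
  unfolding maxu_def by (simp add: add.commute)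

lemma H2_true:
  assumes sp: "SPNE k u1 u2 s" and k: "k \<ge> 1"
  shows "payoff1 u1 (terminal s (H2 a True)) = maxu k u1 u2 - Avg k u2 + a / k
       \<and> payoff2 u2 (terminal s (H2 a True)) = Avg k u2 - a / k
       \<and> efficient k u1 u2 (chosen s a True (proposed s a True))"
proof -
  have lg: "legal k s" and eq: "\<And>h. valid_hist k h \<Longrightarrow>
        (\<forall>t. legal k t \<and> dev1 s t \<longrightarrow> payoff1 u1 (terminal t h) \<le> payoff1 u1 (terminal s h)) \<and>
        (\<forall>t. legal k t \<and> dev2 s t \<longrightarrow> payoff2 u2 (terminal t h) \<le> payoff2 u2 (terminal s h))"
    using sp unfolding SPNE_def by auto
  have q: "price1 s a \<in> Pset k a" using lg unfolding legal_def by auto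
  have Ak: "\<And>p. p \<in> Pset k a \<Longrightarrow> choice2 s a p < k" using lg unfolding legal_def by auto
  have A: "u2 i - p i \<le> u2 (choice2 s a p) - p (choice2 s a p)"
    if pP: "p \<in> Pset k a" and ik: "i < k" for p i
  proof -
    define t where "t = s\<lparr>choice2 := (choice2 s)(a := (choice2 s a)(p := i))\<rparr>"
    have "legal k t" using lg ik unfolding legal_def t_def by auto
    moreover have "dev2 s t" unfolding dev2_def t_def by simp
    moreover have "valid_hist k (H3 a True p)" using pP unfolding valid_hist_def by simp
    ultimately have "payoff2 u2 (terminal t (H3 a True p)) \<le> payoff2 u2 (terminal s (H3 a True p))"
      using eq by blast
    thus ?thesis unfolding t_def terminal_def chosen_def payoff2_def by simp
  qed
  have B: "u1 (choice2 s a p) + p (choice2 s a p) \<le> u1 (choice2 s a (price1 s a)) + price1 s a (choice2 s a (price1 s a))"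
    if pP: "p \<in> Pset k a" for p
  proof -
    define t where "t = s\<lparr>price1 := (price1 s)(a := p)\<rparr>"
    have "legal k t" using lg pP unfolding legal_def t_def by auto
    moreover have "dev1 s t" unfolding dev1_def t_def by simp
    moreover have "valid_hist k (H2 a True)" unfolding valid_hist_def by simp
    ultimately have "payoff1 u1 (terminal t (H2 a True)) \<le> payoff1 u1 (terminal s (H2 a True))"
      using eq by blast
    thus ?thesis unfolding t_def terminal_def chosen_def proposed_def payoff1_def by simp
  qed
  note R = H2gen[OF k q, of u2 "choice2 s a" u1, OF A Ak B]
  thus ?thesis using Ak[OF q]
    unfolding terminal_def chosen_def proposed_def payoff1_def payoff2_def efficient_def
    by (auto simp: algebra_simps)
qed

lemma H2_false:
  assumes sp: "SPNE k u1 u2 s" and k: "k \<ge> 1"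
  shows "payoff1 u1 (terminal s (H2 a False)) = Avg k u1 - a / k
       \<and> payoff2 u2 (terminal s (H2 a False)) = maxu k u1 u2 - Avg k u1 + a / k
       \<and> efficient k u1 u2 (chosen s a False (proposed s a False))"
proof -
  have lg: "legal k s" and eq: "\<And>h. valid_hist k h \<Longrightarrow>
        (\<forall>t. legal k t \<and> dev1 s t \<longrightarrow> payoff1 u1 (terminal t h) \<le> payoff1 u1 (terminal s h)) \<and>
        (\<forall>t. legal k t \<and> dev2 s t \<longrightarrow> payoff2 u2 (terminal t h) \<le> payoff2 u2 (terminal s h))"
    using sp unfolding SPNE_def by auto
  have q: "price2 s a \<in> Pset k a" using lg unfolding legal_def by auto
  have Ak: "\<And>p. p \<in> Pset k a \<Longrightarrow> choice1 s a p < k" using lg unfolding legal_def by auto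
  have A: "u1 i - p i \<le> u1 (choice1 s a p) - p (choice1 s a p)"
    if pP: "p \<in> Pset k a" and ik: "i < k" for p i
  proof -
    define t where "t = s\<lparr>choice1 := (choice1 s)(a := (choice1 s a)(p := i))\<rparr>"
    have "legal k t" using lg ik unfolding legal_def t_def by auto
    moreover have "dev1 s t" unfolding dev1_def t_def by simp
    moreover have "valid_hist k (H3 a False p)" using pP unfolding valid_hist_def by simp
    ultimately have "payoff1 u1 (terminal t (H3 a False p)) \<le> payoff1 u1 (terminal s (H3 a False p))"
      using eq by blast
    thus ?thesis unfolding t_def terminal_def chosen_def payoff1_def by simp
  qed
  have B: "u2 (choice1 s a p) + p (choice1 s a p) \<le> u2 (choice1 s a (price2 s a)) + price2 s a (choice1 s a (price2 s a))"
    if pP: "p \<in> Pset k a" for p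
  proof -
    define t where "t = s\<lparr>price2 := (price2 s)(a := p)\<rparr>"
    have "legal k t" using lg pP unfolding legal_def t_def by auto
    moreover have "dev2 s t" unfolding dev2_def t_def by simp
    moreover have "valid_hist k (H2 a False)" unfolding valid_hist_def by simp
    ultimately have "payoff2 u2 (terminal t (H2 a False)) \<le> payoff2 u2 (terminal s (H2 a False))"
      using eq by blast
    thus ?thesis unfolding t_def terminal_def chosen_def proposed_def payoff2_def by simp
  qed
  note R = H2gen[OF k q, of u1 "choice1 s a" u2, OF A Ak B]
  thus ?thesis using Ak[OF q] maxu_comm[of k u2 u1]
    unfolding terminal_def chosen_def proposed_def payoff1_def payoff2_def efficient_def
    by (auto simp: algebra_simps)
qed


lemma H1:
  assumes sp: "SPNE k u1 u2 s" and k: "k \<ge> 1"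
  shows "payoff2 u2 (terminal s (H1 a)) = max (Avg k u2 - a / k) (maxu k u1 u2 - Avg k u1 + a / k)
       \<and> payoff1 u1 (terminal s (H1 a)) = maxu k u1 u2 - max (Avg k u2 - a / k) (maxu k u1 u2 - Avg k u1 + a / k)
       \<and> efficient k u1 u2 (snd (snd (snd (terminal s (H1 a)))))"
proof -
  have lg: "legal k s" and eq: "\<And>h. valid_hist k h \<Longrightarrow>
        (\<forall>t. legal k t \<and> dev2 s t \<longrightarrow> payoff2 u2 (terminal t h) \<le> payoff2 u2 (terminal s h))"
    using sp unfolding SPNE_def by auto
  have T: "terminal s (H1 a) = terminal s (H2 a (role s a))"
    unfolding terminal_def Let_def by simp
  define t where "t = s\<lparr>role := (role s)(a := \<not> role s a)\<rparr>"
  have "legal k t" using lg unfolding legal_def t_def by simp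
  moreover have "dev2 s t" unfolding dev2_def t_def by simp
  moreover have "valid_hist k (H1 a)" unfolding valid_hist_def by simp
  ultimately have le: "payoff2 u2 (terminal t (H1 a)) \<le> payoff2 u2 (terminal s (H1 a))"
    using eq by blast
  have Tt: "terminal t (H1 a) = terminal s (H2 a (\<not> role s a))"
    unfolding t_def terminal_def Let_def proposed_def chosen_def by simp
  note HT = H2_true[OF sp k, of a] and HF = H2_false[OF sp k, of a]
  have eff: "efficient k u1 u2 (snd (snd (snd (terminal s (H1 a)))))"
    using HT HF unfolding T by (cases "role s a") (auto simp: terminal_def)
  show ?thesis
  proof (cases "role s a")
    case True
    then show ?thesis using le HT HF eff unfolding T Tt by auto
  next
    case False
    then show ?thesis using le HT HF eff unfolding T Tt by auto
  qed
qed

theorem mainTheorem5: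
  fixes k :: nat and u1 u2 :: "nat \<Rightarrow> real" and s :: profile
  assumes "k \<ge> 1"
    and "SPNE k u1 u2 s"
  shows "alpha s = real k / 2 * (Avg k u1 + Avg k u2 - maxu k u1 u2)
       \<and> efficient k u1 u2 (snd (snd (snd (terminal s Root))))
       \<and> payoff1 u1 (terminal s Root) = maxu k u1 u2 / 2 - (Avg k u2 - Avg k u1) / 2
       \<and> payoff2 u2 (terminal s Root) = maxu k u1 u2 / 2 + (Avg k u2 - Avg k u1) / 2"
proof -
  note k = assms(1) and sp = assms(2)
  have lg: "legal k s" and eq: "\<And>h. valid_hist k h \<Longrightarrow>
        (\<forall>t. legal k t \<and> dev1 s t \<longrightarrow> payoff1 u1 (terminal t h) \<le> payoff1 u1 (terminal s h))"
    using sp unfolding SPNE_def by auto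
  define M where "M = maxu k u1 u2"
  define A1 where "A1 = Avg k u1"
  define A2 where "A2 = Avg k u2"
  define F where "F = (\<lambda>a. max (A2 - a / k) (M - A1 + a / k))"
  define a0 where "a0 = real k / 2 * (A1 + A2 - M)"
  have kpos: "real k > 0" using k by simp
  have T: "terminal s Root = terminal s (H1 (alpha s))"
    unfolding terminal_def Let_def by simp
  have dev: "F (alpha s) \<le> F a'" for a'
  proof -
    define t where "t = s\<lparr>alpha := a'\<rparr>"
    have "legal k t" using lg unfolding legal_def t_def by simp
    moreover have "dev1 s t" unfolding dev1_def t_def by simp
    moreover have "valid_hist k Root" unfolding valid_hist_def by simp
    ultimately have le: "payoff1 u1 (terminal t Root) \<le> payoff1 u1 (terminal s Root)"
      using eq by blast
    have "terminal t Root = terminal s (H1 a')"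
      unfolding t_def terminal_def Let_def proposed_def chosen_def by simp
    thus ?thesis using le H1[OF sp k, of a'] H1[OF sp k, of "alpha s"] unfolding T F_def M_def A1_def A2_def
      by simp
  qed
  have a0d: "a0 / k = (A1 + A2 - M) / 2" unfolding a0_def using kpos by (simp add: field_simps)
  have e0: "A2 - a0 / k = M - A1 + a0 / k" unfolding a0d by (simp add: field_simps)
  have Fa0: "F a0 = A2 - a0 / k" unfolding F_def a0d by (simp add: max_def field_simps)
  have al: "alpha s = a0"
  proof (rule ccontr)
    assume "alpha s \<noteq> a0"
    hence "alpha s < a0 \<or> alpha s > a0" by linarith
    thus False
    proof
      assume "alpha s < a0"
      hence "alpha s / k < a0 / k" using kpos by (simp add: divide_strict_right_mono)
      hence "F (alpha s) > A2 - a0 / k" unfolding F_def less_max_iff_disj using a0d by (intro disjI1) linarith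
      thus False using dev[of a0] Fa0 by simp
    next
      assume "alpha s > a0"
      hence "alpha s / k > a0 / k" using kpos by (simp add: divide_strict_right_mono)
      hence "F (alpha s) > A2 - a0 / k" unfolding F_def less_max_iff_disj using e0 by (intro disjI2) linarith
      thus False using dev[of a0] Fa0 by simp
    qed
  qed
  note H = H1[OF sp k, of "alpha s"]
  have Fv: "max (Avg k u2 - alpha s / k) (maxu k u1 u2 - Avg k u1 + alpha s / k) = A2 - a0 / k"
    using Fa0 al unfolding F_def M_def A1_def A2_def by simp
  have p1: "payoff1 u1 (terminal s Root) = M - (A2 - a0 / k)"
    using H unfolding T Fv M_def by simp
  have p2: "payoff2 u2 (terminal s Root) = A2 - a0 / k"
    using H unfolding T Fv by simp
  have ef: "efficient k u1 u2 (snd (snd (snd (terminal s Root))))"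
    using H unfolding T by simp
  show ?thesis
    using p1 p2 ef al unfolding a0d unfolding a0_def M_def[symmetric] A1_def[symmetric] A2_def[symmetric]
    by (simp add: field_simps)
qed

end
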